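(* Let $m>6C^2(C+1)$ and $l_m=\lfloor\frac{m-2}{C+1}\rfloor$. Let $F_m(\mathbf x)=\sum_{i=1}^n a_iP_m(x_i)$ be a node of the escalator tree of $m$-gonal forms with $n\ge (C-4)l_m+5$ and $a_3=a_4=\cdots=a_{(C-4)l_m+5}=3$. (1) If $a_1+a_2+\cdots+a_n\ge 3(m-3)-1$ and $a_i\equiv0\pmod 3$ for all $3\le i\le n$, then $F_m(\mathbf x)$ is universal (hence a leaf). (2) If $a_n\not\equiv 0\pmod 3$, then $F_m(\mathbf x)$ is universal (hence a leaf).
   Context: For an integer $m\ge 3$ and $x\in\mathbb Z$ put $P_m(x)=\frac{m-2}{2}x^2-\frac{m-4}{2}x$. An $m$-gonal form of rank $n$ is $a_1P_m(x_1)+\cdots+a_nP_m(x_n)$ with positive integers $a_1\le\cdots\le a_n$ and $x_i\in\mathbb Z$; it represents $N$ if $N$ is a value at some integer vector, and is universal if it represents every positive integer. The truant of a non-universal form is the smallest positive integer it does not represent (the empty form has truant $1$). The escalator tree of $m$-gonal forms is the rooted tree whose root is the empty form; a universal node is a leaf, and a non-universal node $\sum_{i=1}^k a_iP_m(x_i)$ has as children exactly all forms $\sum_{i=1}^{k+1}a_iP_m(x_i)$ with $a_{k+1}\ge a_k$ (any $a_1\ge1$ if $k=0$) that represent the truant of the node. Standing assumption: $C$ is a fixed absolute constant such that for every $m\ge3$, every $m$-gonal form that represents every positive integer in $[1,C(m-2)]$ is universal. *)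

theory Defs
  imports Main
begin

text \<open>The m-gonal number P_m(x) = ((m-2)x^2 - (m-4)x)/2 for integer x
  (the numerator is always even, so div 2 is exact).\<close>
definition Pgon :: "nat \<Rightarrow> int \<Rightarrow> int" where
  "Pgon m x = ((int m - 2) * x^2 - (int m - 4) * x) div 2"

text \<open>A form is the list [a_1,...,a_n] of its coefficients.\<close>
definition is_form :: "nat list \<Rightarrow> bool" where
  "is_form as \<longleftrightarrow> (\<forall>a\<in>set as. 0 < a) \<and> sorted as"

definition form_value :: "nat \<Rightarrow> nat list \<Rightarrow> int list \<Rightarrow> int" where
  "form_value m as xs = (\<Sum>i<length as. int (as ! i) * Pgon m (xs ! i))"

definition represents :: "nat \<Rightarrow> nat list \<Rightarrow> int \<Rightarrow> bool" where
  "represents m as N \<longleftrightarrow> (\<exists>xs. length xs = length as \<and> form_value m as xs = N)"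

definition universal :: "nat \<Rightarrow> nat list \<Rightarrow> bool" where
  "universal m as \<longleftrightarrow> (\<forall>N::int. 0 < N \<longrightarrow> represents m as N)"

definition truant :: "nat \<Rightarrow> nat list \<Rightarrow> int" where
  "truant m as = (LEAST N::int. 0 < N \<and> \<not> represents m as N)"

inductive escalator_node :: "nat \<Rightarrow> nat list \<Rightarrow> bool" for m where
  root: "escalator_node m []"
| child: "\<lbrakk> escalator_node m as; \<not> universal m as; 1 \<le> b;
            as \<noteq> [] \<longrightarrow> last as \<le> b;
            represents m (as @ [b]) (truant m as) \<rbrakk>
          \<Longrightarrow> escalator_node m (as @ [b])"

definition standing_constant :: "nat \<Rightarrow> bool" where
  "standing_constant C \<longleftrightarrow>
     (\<forall>m\<ge>3. \<forall>as. is_form as \<longrightarrow>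
        (\<forall>N::int. 1 \<le> N \<and> N \<le> int C * (int m - 2) \<longrightarrow> represents m as N) \<longrightarrow>
        universal m as)"

end

theory Submission
  imports Defs
begin

lemma Pgon_alt: "Pgon m x = (int m - 2) * (x*(x-1) div 2) + x"
proof -
  have ev: "even (x*(x-1))" by simp
  have "(int m - 2) * x^2 - (int m - 4) * x = 2 * ((int m - 2) * (x*(x-1) div 2) + x)"
    using ev by (auto simp: power2_eq_square algebra_simps elim!: evenE)
  then show ?thesis unfolding Pgon_def by simp
qed

lemma P0[simp]: "Pgon m 0 = 0" and P1[simp]: "Pgon m 1 = 1"
  and Pm1[simp]: "Pgon m (-1) = int m - 3" and P2[simp]: "Pgon m 2 = int m"
  by (simp_all add: Pgon_def)

lemma tri_ge: "x \<ge> 3 \<or> x \<le> -2 \<Longrightarrow> x*(x-1) div 2 \<ge> 3 \<and> x*(x-1) div 2 \<ge> 1 - x" for x :: int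
proof -
  assume h: "x \<ge> 3 \<or> x \<le> -2"
  have e: "x*(x-1) = 2 * (x*(x-1) div 2)" by simp
  have "x*(x-1) \<ge> 6 \<and> x*(x-1) \<ge> 2 - 2*x"
  proof (cases "x \<ge> 3")
    case True
    have "x*(x-1) \<ge> 3*2" by (rule mult_mono) (use True in auto)
    then show ?thesis using True by auto
  next
    case False
    then have "x \<le> -2" using h by auto
    have a: "(-x)*(1-x) \<ge> 2*3" by (rule mult_mono) (use \<open>x \<le> -2\<close> in auto)
    have b: "(-x)*(-x-1) \<ge> 2*1" by (rule mult_mono) (use \<open>x \<le> -2\<close> in auto)
    from a b show ?thesis by (auto simp: algebra_simps)
  qed
  then show ?thesis using e by linarith
qed

lemma P_nonneg: "3 \<le> m \<Longrightarrow> 0 \<le> Pgon m x"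
proof -
  assume m: "3 \<le> m"
  let ?t = "x*(x-1) div 2"
  have "x*(x-1) \<ge> 0" by (cases "x \<ge> 1") (auto simp: mult_nonneg_nonneg mult_nonpos_nonpos)
  then have t0: "?t \<ge> 0" by simp
  have "(int m - 2) * ?t \<ge> 1 * ?t" by (rule mult_right_mono) (use m t0 in auto)
  moreover have "?t + x \<ge> 0"
  proof -
    have "x*(x-1) = 2 * ?t" by simp
    moreover have "x*(x+1) \<ge> 0" by (cases "x \<ge> 0") (auto simp: mult_nonneg_nonneg mult_nonpos_nonpos)
    ultimately show ?thesis by (auto simp: algebra_simps)
  qed
  ultimately show ?thesis by (simp add: Pgon_alt)
qed

lemma P_big: "4 \<le> m \<Longrightarrow> x \<notin> {-1,0,1,2} \<Longrightarrow> 3 * int m - 8 \<le> Pgon m x"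
proof -
  assume m: "4 \<le> m" and x: "x \<notin> {-1,0,1,2}"
  then have h: "x \<ge> 3 \<or> x \<le> -2" by auto
  let ?t = "x*(x-1) div 2"
  from tri_ge[OF h] have t3: "?t \<ge> 3" and t1: "?t \<ge> 1 - x" by auto
  have "(int m - 3) * ?t \<ge> (int m - 3) * 3" by (rule mult_left_mono) (use m t3 in auto)
  moreover have "Pgon m x = (int m - 3) * ?t + (?t + x)" by (simp add: Pgon_alt algebra_simps)
  moreover have "(int m - 3) * 3 = 3*int m - 9" by simp
  ultimately show ?thesis using t1 by linarith
qed

lemma P_cases: "4 \<le> m \<Longrightarrow> Pgon m x < 3 * int m - 8 \<Longrightarrow> x = -1 \<or> x = 0 \<or> x = 1 \<or> x = 2"
  using P_big by fastforce

lemma P_ge_m3: "4 \<le> m \<Longrightarrow> x \<noteq> 0 \<Longrightarrow> x \<noteq> 1 \<Longrightarrow> int m - 3 \<le> Pgon m x"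
proof -
  assume m: "4 \<le> m" "x \<noteq> 0" "x \<noteq> 1"
  show ?thesis
  proof (cases "x \<in> {-1,0,1,2}")
    case True then show ?thesis using m by auto
  next
    case False then show ?thesis using P_big[OF m(1) False] m by linarith
  qed
qed

lemma P_pos: "4 \<le> m \<Longrightarrow> x \<noteq> 0 \<Longrightarrow> 1 \<le> Pgon m x"
  using P_ge_m3[of m x] by (cases "x = 1") auto

lemma rep_iff: "represents m as N \<longleftrightarrow> (\<exists>f. N = (\<Sum>i<length as. int (as!i) * Pgon m (f i)))"
proof
  assume "represents m as N"
  then obtain xs where "length xs = length as" "form_value m as xs = N" unfolding represents_def by blast
  then show "\<exists>f. N = (\<Sum>i<length as. int (as!i) * Pgon m (f i))" unfolding form_value_def by (intro exI[of _ "(!) xs"]) auto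
next
  assume "\<exists>f. N = (\<Sum>i<length as. int (as!i) * Pgon m (f i))"
  then obtain f where f: "N = (\<Sum>i<length as. int (as!i) * Pgon m (f i))" by blast
  show "represents m as N" unfolding represents_def form_value_def
    by (intro exI[of _ "map f [0..<length as]"]) (auto simp: f intro!: sum.cong)
qed

lemma sum_split: "p \<le> (n::nat) \<Longrightarrow> sum g {..<n} = sum g {..<p} + sum g {p..<n}"
proof -
  assume "p \<le> n"
  then have "{..<n} = {..<p} \<union> {p..<n}" by auto
  then have "sum g {..<n} = sum g ({..<p} \<union> {p..<n})" by simp
  also have "\<dots> = sum g {..<p} + sum g {p..<n}" by (rule sum.union_disjoint) auto
  finally show ?thesis .
qed

lemma rep_prefix: "p \<le> length as \<Longrightarrow> represents m (take p as) N \<Longrightarrow> represents m as N"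
proof -
  assume p: "p \<le> length as" and r: "represents m (take p as) N"
  then obtain f where f: "N = (\<Sum>i<p. int (take p as!i) * Pgon m (f i))"
    unfolding rep_iff by (auto simp: min_def split: if_splits)
  let ?g = "\<lambda>i. if i < p then f i else 0"
  have "(\<Sum>i<length as. int (as!i) * Pgon m (?g i)) = (\<Sum>i<p. int (as!i) * Pgon m (?g i)) + (\<Sum>i\<in>{p..<length as}. int (as!i) * Pgon m (?g i))"
    by (rule sum_split[OF p])
  also have "\<dots> = N" unfolding f by (auto intro!: sum.cong)
  finally show ?thesis unfolding rep_iff by metis
qed

lemma rep_snoc: "represents m (as@[b]) N \<Longrightarrow> \<exists>v x. represents m as v \<and> N = v + int b * Pgon m x"
proof -
  assume "represents m (as@[b]) N"
  then obtain f where f: "N = (\<Sum>i<Suc (length as). int ((as@[b])!i) * Pgon m (f i))" unfolding rep_iff by auto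
  have "N = (\<Sum>i<length as. int (as!i) * Pgon m (f i)) + int b * Pgon m (f (length as))"
    unfolding f by (auto simp: nth_append intro!: sum.cong)
  then show ?thesis unfolding rep_iff by blast
qed

lemma rep_nonneg: "3 \<le> m \<Longrightarrow> represents m as N \<Longrightarrow> 0 \<le> N"
  unfolding rep_iff by (auto intro!: sum_nonneg mult_nonneg_nonneg P_nonneg)

lemma truant_props:
  assumes "\<not> universal m as"
  shows "0 < truant m as" "\<not> represents m as (truant m as)"
    "\<And>N. 0 < N \<Longrightarrow> N < truant m as \<Longrightarrow> represents m as N"
    "\<And>N. 0 < N \<Longrightarrow> \<not> represents m as N \<Longrightarrow> truant m as \<le> N"
proof -
  let ?P = "\<lambda>N::int. 0 < N \<and> \<not> represents m as N"
  from assms obtain N0 where N0: "?P N0" unfolding universal_def by auto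
  let ?S = "\<lambda>n::nat. ?P (int n)"
  have "?S (nat N0)" using N0 by auto
  define n0 where "n0 = (LEAST n. ?S n)"
  have n0: "?S n0" unfolding n0_def by (rule LeastI[of ?S, OF \<open>?S (nat N0)\<close>])
  have min: "int n0 \<le> y" if "?P y" for y
  proof -
    have "?S (nat y)" using that by auto
    then have "n0 \<le> nat y" unfolding n0_def by (rule Least_le)
    then show ?thesis using that by auto
  qed
  have t: "truant m as = int n0" unfolding truant_def
    by (rule Least_equality) (use n0 min in auto)
  show "0 < truant m as" "\<not> represents m as (truant m as)" using n0 t by auto
  show "\<And>N. 0 < N \<Longrightarrow> N < truant m as \<Longrightarrow> represents m as N" using min t by force
  show "\<And>N. 0 < N \<Longrightarrow> \<not> represents m as N \<Longrightarrow> truant m as \<le> N" using min t by force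
qed

lemma node_prefix: "escalator_node m as \<Longrightarrow> p < length as \<Longrightarrow>
   escalator_node m (take p as) \<and> \<not> universal m (take p as) \<and> represents m (take p as @ [as!p]) (truant m (take p as))"
proof (induction arbitrary: p rule: escalator_node.induct)
  case root then show ?case by simp
next
  case (child as b)
  show ?case
  proof (cases "p < length as")
    case True
    then have "take p (as@[b]) = take p as" "(as@[b])!p = as!p" by (auto simp: nth_append)
    then show ?thesis using child True by auto
  next
    case False
    then have "p = length as" using child by auto
    then show ?thesis using child by auto
  qed
qed

lemma node_form: "escalator_node m as \<Longrightarrow> is_form as"
proof (induction rule: escalator_node.induct)
  case root then show ?case by (simp add: is_form_def)
next
  case (child as b)
  have "x \<le> b" if "x \<in> set as" for x
  proof -
    have ne: "as \<noteq> []" using that by auto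
    have "as = butlast as @ [last as]" using ne by simp
    then have "sorted (butlast as @ [last as])" using child unfolding is_form_def by metis
    then have "x \<le> last as" using that \<open>as = butlast as @ [last as]\<close>
      by (metis (no_types, lifting) Un_iff empty_iff empty_set last_in_set list.set_intros(1) ne
          order_refl set_ConsD set_append sorted_append)
    then show ?thesis using child ne by auto
  qed
  then show ?case using child unfolding is_form_def by (auto simp: sorted_append)
qed

lemma child_le_truant:
  assumes "4 \<le> m" "\<not> universal m as" "represents m (as@[b]) (truant m as)"
  shows "int b \<le> truant m as"
proof -
  obtain v x where v: "represents m as v" and e: "truant m as = v + int b * Pgon m x"
    using rep_snoc[OF assms(3)] by blast
  have "x \<noteq> 0" using v e truant_props(2)[OF assms(2)] by auto
  then have "1 \<le> Pgon m x" using P_pos assms(1) by auto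
  then have "int b * 1 \<le> int b * Pgon m x" by (intro mult_left_mono) auto
  moreover have "0 \<le> v" using rep_nonneg[of m as v] v assms(1) by auto
  ultimately show ?thesis using e by linarith
qed

lemma rep3: "represents 5 [1,1,11] (Pgon 5 x + Pgon 5 y + 11 * Pgon 5 z)"
  unfolding represents_def form_value_def
  by (intro exI[of _ "[x,y,z]"]) (simp add: numeral_eq_Suc lessThan_Suc)

lemma P5_big: "x \<ge> 6 \<or> x \<le> -6 \<Longrightarrow> Pgon 5 x \<ge> 51"
proof -
  assume h: "x \<ge> 6 \<or> x \<le> -6"
  have e: "Pgon 5 x = (3*(x*x) - x) div 2" by (simp add: Pgon_def power2_eq_square)
  have "x*x \<ge> 36"
  proof (cases "x \<ge> 6")
    case True then have "x*x \<ge> 6*6" by (intro mult_mono) auto then show ?thesis by simp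
  next
    case False then have "x \<le> -6" using h by auto
    then have "(-x)*(-x) \<ge> 6*6" by (intro mult_mono) auto then show ?thesis by simp
  qed
  then have "3*(x*x) - x \<ge> 102"
  proof (cases "x \<ge> 6")
    case True
    then have "x*x \<ge> 6*x" by (intro mult_right_mono) auto
    then show ?thesis using True by linarith
  qed (use h in linarith)
  then show ?thesis unfolding e by linarith
qed

lemma P5_vals: "Pgon 5 x \<le> 43 \<Longrightarrow> Pgon 5 x \<in> {0,1,2,5,7,12,15,22,26,35,40}"
proof -
  assume a: "Pgon 5 x \<le> 43"
  then have "\<not> (x \<ge> 6 \<or> x \<le> -6)" using P5_big by force
  then have "x = -5 \<or> x = -4 \<or> x = -3 \<or> x = -2 \<or> x = -1 \<or> x = 0 \<or> x = 1 \<or> x = 2 \<or> x = 3 \<or> x = 4 \<or> x = 5" by presburger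
  then show ?thesis by (elim disjE) (simp_all add: Pgon_def)
qed

lemma pent_not43: "\<not> represents 5 [1,1,11] 43"
proof
  assume "represents 5 [1,1,11] 43"
  then obtain xs where l: "length xs = length [1,1,11::nat]" and v: "form_value 5 [1,1,11] xs = 43" unfolding represents_def by blast
  then have e: "Pgon 5 (xs!0) + Pgon 5 (xs!1) + 11 * Pgon 5 (xs!2) = 43"
    unfolding form_value_def by (simp add: numeral_eq_Suc lessThan_Suc)
  have n: "0 \<le> Pgon 5 y" for y by (rule P_nonneg) simp
  have "Pgon 5 (xs!0) \<le> 43" "Pgon 5 (xs!1) \<le> 43" "Pgon 5 (xs!2) \<le> 43" using e n[of "xs!0"] n[of "xs!1"] n[of "xs!2"] by linarith+
  then have "Pgon 5 (xs!0) \<in> {0,1,2,5,7,12,15,22,26,35,40}" "Pgon 5 (xs!1) \<in> {0,1,2,5,7,12,15,22,26,35,40}" "Pgon 5 (xs!2) \<in> {0,1,2,5,7,12,15,22,26,35,40}"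
    using P5_vals by blast+
  then show False using e by auto
qed

lemma pent_rep: "1 \<le> N \<Longrightarrow> N \<le> 42 \<Longrightarrow> represents 5 [1,1,11] N"
proof -
  assume a: "1 \<le> N" "N \<le> 42"
  have r1: "represents 5 [1,1,11] 1" using rep3[of "0" "1" "0"] by (simp add: Pgon_def)
  have r2: "represents 5 [1,1,11] 2" using rep3[of "-1" "0" "0"] by (simp add: Pgon_def)
  have r3: "represents 5 [1,1,11] 3" using rep3[of "-1" "1" "0"] by (simp add: Pgon_def)
  have r4: "represents 5 [1,1,11] 4" using rep3[of "-1" "-1" "0"] by (simp add: Pgon_def)
  have r5: "represents 5 [1,1,11] 5" using rep3[of "0" "2" "0"] by (simp add: Pgon_def)
  have r6: "represents 5 [1,1,11] 6" using rep3[of "1" "2" "0"] by (simp add: Pgon_def)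
  have r7: "represents 5 [1,1,11] 7" using rep3[of "-2" "0" "0"] by (simp add: Pgon_def)
  have r8: "represents 5 [1,1,11] 8" using rep3[of "-2" "1" "0"] by (simp add: Pgon_def)
  have r9: "represents 5 [1,1,11] 9" using rep3[of "-2" "-1" "0"] by (simp add: Pgon_def)
  have r10: "represents 5 [1,1,11] 10" using rep3[of "2" "2" "0"] by (simp add: Pgon_def)
  have r11: "represents 5 [1,1,11] 11" using rep3[of "0" "0" "1"] by (simp add: Pgon_def)
  have r12: "represents 5 [1,1,11] 12" using rep3[of "-2" "2" "0"] by (simp add: Pgon_def)
  have r13: "represents 5 [1,1,11] 13" using rep3[of "-1" "0" "1"] by (simp add: Pgon_def)
  have r14: "represents 5 [1,1,11] 14" using rep3[of "-2" "-2" "0"] by (simp add: Pgon_def)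
  have r15: "represents 5 [1,1,11] 15" using rep3[of "-3" "0" "0"] by (simp add: Pgon_def)
  have r16: "represents 5 [1,1,11] 16" using rep3[of "-3" "1" "0"] by (simp add: Pgon_def)
  have r17: "represents 5 [1,1,11] 17" using rep3[of "-3" "-1" "0"] by (simp add: Pgon_def)
  have r18: "represents 5 [1,1,11] 18" using rep3[of "-2" "0" "1"] by (simp add: Pgon_def)
  have r19: "represents 5 [1,1,11] 19" using rep3[of "-2" "1" "1"] by (simp add: Pgon_def)
  have r20: "represents 5 [1,1,11] 20" using rep3[of "-3" "2" "0"] by (simp add: Pgon_def)
  have r21: "represents 5 [1,1,11] 21" using rep3[of "2" "2" "1"] by (simp add: Pgon_def)
  have r22: "represents 5 [1,1,11] 22" using rep3[of "-3" "-2" "0"] by (simp add: Pgon_def)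
  have r23: "represents 5 [1,1,11] 23" using rep3[of "-2" "2" "1"] by (simp add: Pgon_def)
  have r24: "represents 5 [1,1,11] 24" using rep3[of "-1" "0" "-1"] by (simp add: Pgon_def)
  have r25: "represents 5 [1,1,11] 25" using rep3[of "-2" "-2" "1"] by (simp add: Pgon_def)
  have r26: "represents 5 [1,1,11] 26" using rep3[of "-4" "0" "0"] by (simp add: Pgon_def)
  have r27: "represents 5 [1,1,11] 27" using rep3[of "-4" "1" "0"] by (simp add: Pgon_def)
  have r28: "represents 5 [1,1,11] 28" using rep3[of "-4" "-1" "0"] by (simp add: Pgon_def)
  have r29: "represents 5 [1,1,11] 29" using rep3[of "-2" "0" "-1"] by (simp add: Pgon_def)
  have r30: "represents 5 [1,1,11] 30" using rep3[of "-3" "-3" "0"] by (simp add: Pgon_def)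
  have r31: "represents 5 [1,1,11] 31" using rep3[of "-4" "2" "0"] by (simp add: Pgon_def)
  have r32: "represents 5 [1,1,11] 32" using rep3[of "2" "2" "-1"] by (simp add: Pgon_def)
  have r33: "represents 5 [1,1,11] 33" using rep3[of "-4" "-2" "0"] by (simp add: Pgon_def)
  have r34: "represents 5 [1,1,11] 34" using rep3[of "-2" "2" "-1"] by (simp add: Pgon_def)
  have r35: "represents 5 [1,1,11] 35" using rep3[of "-1" "4" "1"] by (simp add: Pgon_def)
  have r36: "represents 5 [1,1,11] 36" using rep3[of "-2" "-2" "-1"] by (simp add: Pgon_def)
  have r37: "represents 5 [1,1,11] 37" using rep3[of "-4" "0" "1"] by (simp add: Pgon_def)
  have r38: "represents 5 [1,1,11] 38" using rep3[of "-4" "1" "1"] by (simp add: Pgon_def)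
  have r39: "represents 5 [1,1,11] 39" using rep3[of "-4" "-1" "1"] by (simp add: Pgon_def)
  have r40: "represents 5 [1,1,11] 40" using rep3[of "-5" "0" "0"] by (simp add: Pgon_def)
  have r41: "represents 5 [1,1,11] 41" using rep3[of "-5" "1" "0"] by (simp add: Pgon_def)
  have r42: "represents 5 [1,1,11] 42" using rep3[of "-5" "-1" "0"] by (simp add: Pgon_def)
  have "N = 1 \<or> N = 2 \<or> N = 3 \<or> N = 4 \<or> N = 5 \<or> N = 6 \<or> N = 7 \<or> N = 8 \<or> N = 9 \<or> N = 10 \<or> N = 11 \<or> N = 12 \<or> N = 13 \<or> N = 14 \<or> N = 15 \<or> N = 16 \<or> N = 17 \<or> N = 18 \<or> N = 19 \<or> N = 20 \<or> N = 21 \<or> N = 22 \<or> N = 23 \<or> N = 24 \<or> N = 25 \<or> N = 26 \<or> N = 27 \<or> N = 28 \<or> N = 29 \<or> N = 30 \<or> N = 31 \<or> N = 32 \<or> N = 33 \<or> N = 34 \<or> N = 35 \<or> N = 36 \<or> N = 37 \<or> N = 38 \<or> N = 39 \<or> N = 40 \<or> N = 41 \<or> N = 42" using a by presburger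
  then show ?thesis using r1 r2 r3 r4 r5 r6 r7 r8 r9 r10 r11 r12 r13 r14 r15 r16 r17 r18 r19 r20 r21 r22 r23 r24 r25 r26 r27 r28 r29 r30 r31 r32 r33 r34 r35 r36 r37 r38 r39 r40 r41 r42 by fastforce
qed

lemma C_ge15: "standing_constant C \<Longrightarrow> 15 \<le> C"
proof (rule ccontr)
  assume s: "standing_constant C" and c: "\<not> 15 \<le> C"
  have "is_form [1,1,11]" by (simp add: is_form_def)
  moreover have "\<forall>N::int. 1 \<le> N \<and> N \<le> int C * (int 5 - 2) \<longrightarrow> represents 5 [1,1,11] N"
    using c pent_rep by auto
  moreover have "(3::nat) \<le> 5" by simp
  ultimately have "universal 5 [1,1,11]" using s unfolding standing_constant_def by blast
  then show False using pent_not43 unfolding universal_def by auto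
qed

lemma threes_nat: "e \<le> s \<Longrightarrow> s + u \<le> k \<Longrightarrow>
  \<exists>g. (\<Sum>i\<in>{lo..<lo+k}. 3 * Pgon m (g i)) = 3 * (int s * (int m - 3) + 3 * int e + int u)"
proof (induction k arbitrary: s e u)
  case 0 then show ?case by auto
next
  case (Suc k)
  have split: "\<And>g. (\<Sum>i\<in>{lo..<lo+Suc k}. 3 * Pgon m (g i)) = (\<Sum>i\<in>{lo..<lo+k}. 3 * Pgon m (g i)) + 3 * Pgon m (g (lo+k))"
    by simp
  have upd: "\<And>g v. (\<Sum>i\<in>{lo..<lo+k}. 3 * Pgon m ((g(lo+k := v)) i)) = (\<Sum>i\<in>{lo..<lo+k}. 3 * Pgon m (g i))"
    by (rule sum.cong) auto
  show ?case
  proof (cases "e > 0")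
    case True
    with Suc.prems have "e - 1 \<le> s - 1" "(s - 1) + u \<le> k" by auto
    then obtain g where g: "(\<Sum>i\<in>{lo..<lo+k}. 3 * Pgon m (g i)) = 3 * (int (s-1) * (int m - 3) + 3 * int (e-1) + int u)"
      using Suc.IH by blast
    show ?thesis
      by (rule exI[of _ "g(lo+k := 2)"]) (use True Suc.prems in \<open>simp only: split upd g, simp add: of_nat_diff algebra_simps\<close>)
  next
    case False
    show ?thesis
    proof (cases "s > 0")
      case True
      with Suc.prems False have "0 \<le> s - 1" "(s - 1) + u \<le> k" by auto
      then obtain g where g: "(\<Sum>i\<in>{lo..<lo+k}. 3 * Pgon m (g i)) = 3 * (int (s-1) * (int m - 3) + 3 * int 0 + int u)"
        using Suc.IH by blast
      show ?thesis
        by (rule exI[of _ "g(lo+k := -1)"]) (use True False Suc.prems in \<open>simp only: split upd g, simp add: of_nat_diff algebra_simps\<close>)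
    next
      case s0: False
      show ?thesis
      proof (cases "u > 0")
        case True
        with Suc.prems False s0 have "(0::nat) \<le> 0" "0 + (u - 1) \<le> k" by auto
        then obtain g where g: "(\<Sum>i\<in>{lo..<lo+k}. 3 * Pgon m (g i)) = 3 * (int 0 * (int m - 3) + 3 * int 0 + int (u-1))"
          using Suc.IH by blast
        show ?thesis
          by (rule exI[of _ "g(lo+k := 1)"]) (use True False s0 Suc.prems in \<open>simp only: split upd g, simp add: of_nat_diff algebra_simps\<close>)
      next
        case u0: False
        obtain g where g: "(\<Sum>i\<in>{lo..<lo+k}. 3 * Pgon m (g i)) = 3 * (int 0 * (int m - 3) + 3 * int 0 + int 0)"
          using Suc.IH[of 0 0 0] by auto
        show ?thesis
          by (rule exI[of _ "g(lo+k := 0)"]) (use u0 False s0 Suc.prems in \<open>simp only: split upd g, simp\<close>)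
      qed
    qed
  qed
qed

lemma y_split: "0 \<le> s \<Longrightarrow> 0 \<le> y \<Longrightarrow> y \<le> k + 2*s \<Longrightarrow> s + 2 \<le> k \<Longrightarrow>
   \<exists>e u. 0 \<le> e \<and> e \<le> s \<and> 0 \<le> u \<and> s + u \<le> k \<and> y = 3*e + u" for s y k :: int
proof -
  assume a: "0 \<le> s" "0 \<le> y" "y \<le> k + 2*s" "s + 2 \<le> k"
  show ?thesis
  proof (cases "y \<le> k - s")
    case True then show ?thesis using a by (intro exI[of _ 0] exI[of _ y]) auto
  next
    case False
    define d where "d = y - (k - s) + 2"
    have dm: "d = 3 * (d div 3) + d mod 3" "0 \<le> d mod 3" "d mod 3 < 3" by auto
    show ?thesis using a False dm unfolding d_def
      by (intro exI[of _ "d div 3"] exI[of _ "y - 3 * (d div 3)"]) (auto simp: d_def)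
  qed
qed

lemma threes: "0 \<le> s \<Longrightarrow> 0 \<le> y \<Longrightarrow> y \<le> int k + 2*s \<Longrightarrow> s + 2 \<le> int k \<Longrightarrow>
  \<exists>g. (\<Sum>i\<in>{lo..<lo+k}. 3 * Pgon m (g i)) = 3 * (s * (int m - 3) + y)"
proof -
  assume a: "0 \<le> s" "0 \<le> y" "y \<le> int k + 2*s" "s + 2 \<le> int k"
  obtain e u where eu: "0 \<le> e" "e \<le> s" "0 \<le> u" "s + u \<le> int k" "y = 3*e + u"
    using y_split[OF a] by blast
  have "nat e \<le> nat s" "nat s + nat u \<le> k" using eu a by auto
  from threes_nat[OF this, where lo=lo and m=m] obtain g where
    g: "(\<Sum>i\<in>{lo..<lo+k}. 3 * Pgon m (g i)) = 3 * (int (nat s) * (int m - 3) + 3 * int (nat e) + int (nat u))" by blast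
  have "(\<Sum>i\<in>{lo..<lo+k}. 3 * Pgon m (g i)) = 3 * (s * (int m - 3) + y)" using g eu a by (simp add: algebra_simps)
  then show ?thesis by blast
qed

lemma assemble:
  assumes "length as = n" "2 \<le> L" "L \<le> n" "as!0 = 1" "as!1 = a2" "\<forall>i. 2 \<le> i \<and> i < L \<longrightarrow> as!i = 3"
  shows "represents m as (Pgon m x0 + int a2 * Pgon m x1 + (\<Sum>i\<in>{2..<L}. 3 * Pgon m (g1 i))
            + (\<Sum>i\<in>{L..<n}. int (as!i) * Pgon m (g2 i)))"
proof -
  define f where "f i = (if i = 0 then x0 else if i = 1 then x1 else if i < L then g1 i else g2 i)" for i
  let ?F = "\<lambda>i. int (as!i) * Pgon m (f i)"
  have "(\<Sum>i<n. ?F i) = (\<Sum>i<L. ?F i) + (\<Sum>i\<in>{L..<n}. ?F i)" by (rule sum_split) fact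
  also have "(\<Sum>i<L. ?F i) = (\<Sum>i<2. ?F i) + (\<Sum>i\<in>{2..<L}. ?F i)" by (rule sum_split) fact
  also have "(\<Sum>i<2. ?F i) = Pgon m x0 + int a2 * Pgon m x1"
    using assms by (simp add: numeral_2_eq_2 f_def)
  also have "(\<Sum>i\<in>{2..<L}. ?F i) = (\<Sum>i\<in>{2..<L}. 3 * Pgon m (g1 i))"
    using assms by (intro sum.cong) (auto simp: f_def)
  also have "(\<Sum>i\<in>{L..<n}. ?F i) = (\<Sum>i\<in>{L..<n}. int (as!i) * Pgon m (g2 i))"
    using assms by (intro sum.cong) (auto simp: f_def)
  finally show ?thesis unfolding rep_iff using assms(1) by metis
qed

definition bad :: "nat \<Rightarrow> nat \<Rightarrow> int \<Rightarrow> bool" where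
  "bad a2 m N \<longleftrightarrow> (a2 = 1 \<and> int m mod 3 = 0 \<and> N mod 3 = 2) \<or> (a2 = 1 \<and> int m mod 3 = 1 \<and> N mod 3 = 0)
      \<or> (a2 = 2 \<and> int m mod 3 = 2 \<and> N mod 3 = 0)"

lemma zrep:
  fixes z k :: int
  assumes m: "20 \<le> m" and a2: "a2 = 1 \<or> a2 = 2" and kb: "2 * int m \<le> 3 * k"
    and z: "0 \<le> z" "z < 3 * (int m - 3)" and good: "\<not> bad a2 m z"
  shows "\<exists>x0 x1 y. z = Pgon m x0 + int a2 * Pgon m x1 + 3 * y \<and> 0 \<le> y \<and> y \<le> k"
proof (cases "z \<le> 3*k + 2")
  case True
  have d: "z = 3 * (z div 3) + z mod 3" "0 \<le> z mod 3" "z mod 3 < 3" by auto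
  have y: "0 \<le> z div 3" "z div 3 \<le> k" using True z by auto
  consider "z mod 3 = 0" | "z mod 3 = 1" | "z mod 3 = 2" using d by linarith
  then show ?thesis
  proof cases
    case 1 then show ?thesis using d y by (intro exI[of _ 0] exI[of _ 0] exI[of _ "z div 3"]) auto
  next
    case 2 then show ?thesis using d y by (intro exI[of _ 1] exI[of _ 0] exI[of _ "z div 3"]) auto
  next
    case 3
    show ?thesis
    proof (cases "a2 = 1")
      case True then show ?thesis using d y 3 by (intro exI[of _ 1] exI[of _ 1] exI[of _ "z div 3"]) auto
    next
      case False then have "a2 = 2" using a2 by auto
      then show ?thesis using d y 3 by (intro exI[of _ 0] exI[of _ 1] exI[of _ "z div 3"]) auto
    qed
  qed
next
  case False
  define M where "M = int m"
  have M: "20 \<le> M" "2*M \<le> 3*k" using m kb by (auto simp: M_def)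
  have zb: "z \<ge> 2*M + 3" using False M by linarith
  have gm: "\<not> bad a2 m z" by fact
  have "\<exists>x0 x1. M - 3 \<le> Pgon m x0 + int a2 * Pgon m x1 \<and> Pgon m x0 + int a2 * Pgon m x1 \<le> 2*M - 5
          \<and> (z - (Pgon m x0 + int a2 * Pgon m x1)) mod 3 = 0"
  proof (cases "a2 = 1")
    case True
    have "(z-(M-3)) mod 3 = 0 \<or> (z-(M-2)) mod 3 = 0 \<or> (z-(2*M-6)) mod 3 = 0"
      using gm True unfolding bad_def M_def by presburger
    then show ?thesis using True M
    proof (elim disjE)
      assume "(z-(M-3)) mod 3 = 0" then show ?thesis using True M by (intro exI[of _ "-1"] exI[of _ 0]) (auto simp: M_def)
    next
      assume "(z-(M-2)) mod 3 = 0" then show ?thesis using True M by (intro exI[of _ "-1"] exI[of _ 1]) (auto simp: M_def)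
    next
      assume "(z-(2*M-6)) mod 3 = 0" then show ?thesis using True M by (intro exI[of _ "-1"] exI[of _ "-1"]) (auto simp: M_def)
    qed
  next
    case False
    then have a22: "a2 = 2" using a2 by auto
    have "(z-(M-3)) mod 3 = 0 \<or> (z-(M-1)) mod 3 = 0 \<or> (z-(2*M-6)) mod 3 = 0 \<or> (z-(2*M-5)) mod 3 = 0"
      using gm a22 unfolding bad_def M_def by presburger
    then show ?thesis
    proof (elim disjE)
      assume "(z-(M-3)) mod 3 = 0" then show ?thesis using a22 M by (intro exI[of _ "-1"] exI[of _ 0]) (auto simp: M_def)
    next
      assume "(z-(M-1)) mod 3 = 0" then show ?thesis using a22 M by (intro exI[of _ "-1"] exI[of _ 1]) (auto simp: M_def)
    next
      assume "(z-(2*M-6)) mod 3 = 0" then show ?thesis using a22 M by (intro exI[of _ 0] exI[of _ "-1"]) (auto simp: M_def)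
    next
      assume "(z-(2*M-5)) mod 3 = 0" then show ?thesis using a22 M by (intro exI[of _ 1] exI[of _ "-1"]) (auto simp: M_def)
    qed
  qed
  then obtain x0 x1 where v: "M - 3 \<le> Pgon m x0 + int a2 * Pgon m x1" "Pgon m x0 + int a2 * Pgon m x1 \<le> 2*M - 5"
          "(z - (Pgon m x0 + int a2 * Pgon m x1)) mod 3 = 0" by (elim exE conjE) (rule that; assumption)
  have w: "0 \<le> z - (Pgon m x0 + int a2 * Pgon m x1)"
          "z - (Pgon m x0 + int a2 * Pgon m x1) \<le> 2*(M-3)" "(z - (Pgon m x0 + int a2 * Pgon m x1)) mod 3 = 0"
    using v zb z(2) unfolding M_def by auto
  show ?thesis using w M
    by (intro exI[of _ x0] exI[of _ x1] exI[of _ "(z - (Pgon m x0 + int a2 * Pgon m x1)) div 3"]) auto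
qed


lemma mod3_mod: "0 < q \<Longrightarrow> (N mod (3*q)) mod 3 = N mod 3" for N q :: int
  by (simp add: mod_mod_cancel)

lemma cov0:
  assumes a2: "a2 = 1 \<or> a2 = 2" and m: "20 \<le> m" and kb: "2 * int m \<le> 3 * int k"
    and N: "0 \<le> N" "N div (3*(int m - 3)) + 2 \<le> int k" and good: "\<not> bad a2 m N \<or> N = 0"
  shows "\<exists>x0 x1 g1. N = Pgon m x0 + int a2 * Pgon m x1 + (\<Sum>i\<in>{lo..<lo+k}. 3 * Pgon m (g1 i))"
proof (cases "N = 0")
  case True
  then show ?thesis by (intro exI[of _ 0] exI[of _ 0] exI[of _ "\<lambda>_. 0"]) simp
next
  case False
  then have good: "\<not> bad a2 m N" using good by auto
  define d where "d = 3 * (int m - 3)"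
  have d0: "0 < d" using m by (simp add: d_def)
  define s where "s = N div d"
  define z where "z = N mod d"
  have Nsz: "N = d * s + z" unfolding s_def z_def by simp
  have z: "0 \<le> z" "z < 3 * (int m - 3)" using d0 unfolding z_def d_def by auto
  have zm: "z mod 3 = N mod 3" unfolding z_def d_def using mod3_mod[of "int m - 3" N] m by simp
  have "\<not> bad a2 m z" using good zm unfolding bad_def by simp
  from zrep[OF m a2 _ z this, of "int k"] kb obtain x0 x1 y where
    xy: "z = Pgon m x0 + int a2 * Pgon m x1 + 3 * y" "0 \<le> y" "y \<le> int k" by blast
  have s0: "0 \<le> s" unfolding s_def using N d0 by (simp add: pos_imp_zdiv_nonneg_iff)
  have s2: "s + 2 \<le> int k" using N unfolding s_def d_def by simp
  from threes[OF s0 xy(2) _ s2, where lo=lo and m=m] xy(3) s0 obtain g where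
    g: "(\<Sum>i\<in>{lo..<lo+k}. 3 * Pgon m (g i)) = 3 * (s * (int m - 3) + y)" by auto
  have "N = Pgon m x0 + int a2 * Pgon m x1 + (\<Sum>i\<in>{lo..<lo+k}. 3 * Pgon m (g i))"
    unfolding g using Nsz xy(1) by (simp add: d_def algebra_simps)
  then show ?thesis by blast
qed

lemma cov:
  assumes "length as = n" "2 \<le> L" "L \<le> n" "as!0 = 1" "as!1 = a2" "\<forall>i. 2 \<le> i \<and> i < L \<longrightarrow> as!i = 3"
    and a2: "a2 = 1 \<or> a2 = 2" and m: "20 \<le> m" and kb: "2 * int m \<le> 3 * int (L-2)"
    and N: "0 \<le> N" "N div (3*(int m - 3)) + 2 \<le> int (L-2)" and good: "\<not> bad a2 m N \<or> N = 0"
  shows "represents m as N"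
proof -
  from cov0[OF a2 m kb N good, of 2] obtain x0 x1 g1 where
    e: "N = Pgon m x0 + int a2 * Pgon m x1 + (\<Sum>i\<in>{2..<2+(L-2)}. 3 * Pgon m (g1 i))" by blast
  have "represents m as (Pgon m x0 + int a2 * Pgon m x1 + (\<Sum>i\<in>{2..<L}. 3 * Pgon m (g1 i))
            + (\<Sum>i\<in>{L..<n}. int (as!i) * Pgon m ((\<lambda>_. 0) i)))"
    by (rule assemble) (use assms in auto)
  moreover have "2 + (L-2) = L" using assms(2) by simp
  ultimately show ?thesis using e by simp
qed

lemma params:
  fixes C m :: nat
  assumes C: "15 \<le> C" and mC: "6 * C^2 * (C+1) < m"
  shows "2 * int m \<le> 3 * int ((C-4)*((m-2) div (C+1)) + 5 - 2)"
    and "int C + 2 \<le> int ((C-4)*((m-2) div (C+1)) + 5 - 2)"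
    and "20 \<le> m"
proof -
  define l where "l = (m-2) div (C+1)"
  have lb: "m - 2 < (C+1) * (l + 1)"
  proof -
    have "m - 2 = (C+1) * l + (m-2) mod (C+1)" unfolding l_def by (metis div_mult_mod_eq mult.commute)
    moreover have "(m-2) mod (C+1) < C+1" by simp
    moreover have "(C+1) * (l+1) = (C+1) * l + (C+1)" by simp
    ultimately show ?thesis by linarith
  qed
  have "C^2 \<ge> 15^2" using C by (intro power_mono) auto
  then have "C^2 * (C+1) \<ge> 15^2*16" using C by (intro mult_mono) auto
  then have c3: "C^2 * (C+1) \<ge> 3600" by simp
  moreover have "6 * C^2 * (C+1) = 6 * (C^2*(C+1))" by simp
  ultimately show m20: "20 \<le> m" using mC by linarith
  define c where "c = int C"
  define M where "M = int m"
  define li where "li = int l"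
  have cc: "c \<ge> 15" using C by (simp add: c_def)
  have "int (m - 2) < int ((C+1)*(l+1))" using lb by (simp only: of_nat_less_iff)
  then have "int m - 2 < (int C+1)*(int l + 1)" using m20 by (simp add: of_nat_diff algebra_simps)
  then have A: "M - 2 - c \<le> li * (c+1)" unfolding c_def M_def li_def
    by (simp add: algebra_simps)
  have B: "3*(c-4)*(M-2-c) \<le> 3*(c-4)*(li*(c+1))" using A cc by (intro mult_left_mono) auto
  have "int (6 * C^2 * (C+1)) < int m" using mC by (simp only: of_nat_less_iff)
  then have Mb: "M > 6*c*c*(c+1)" unfolding c_def M_def by (simp add: power2_eq_square algebra_simps)
  have cM: "c*M \<ge> 15*M" using cc m20 unfolding M_def by (intro mult_right_mono) auto
  have ccc: "c*c*(c+1) \<ge> c*c" using cc by (simp add: algebra_simps)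
  have key: "(c+1)*(2*M) \<le> (c+1)*(3*((c-4)*li + 3))"
  proof -
    have "(c+1)*(3*((c-4)*li + 3)) = 3*(c-4)*(li*(c+1)) + 9*(c+1)" by (simp add: algebra_simps)
    moreover have "(c+1)*(2*M) \<le> 3*(c-4)*(M-2-c) + 9*(c+1)"
    proof -
      have f1: "3*(c-4)*(M-2-c) + 9*(c+1) - (c+1)*(2*M) = (c*M - 14*M) - 3*(c*c) + 15*c + 33"
        by (simp add: algebra_simps)
      have f3: "M > 6*(c*c) + 6*(c*c*c)" using Mb by (simp add: algebra_simps)
      have f4: "c*c*c \<ge> 0" using cc by simp
      have f5: "c*c \<ge> 0" by simp
      have f2: "c*M \<ge> 15*M" using cM by simp
      from f1 f2 f3 f4 f5 cc show ?thesis by linarith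
    qed
    ultimately show ?thesis using B by linarith
  qed
  have k1: "2*M \<le> 3*((c-4)*li + 3)" using key cc by (simp add: mult_le_cancel_left)
  have eq: "int ((C-4)*l + 5 - 2) = (c-4)*li + 3" using C unfolding c_def li_def by (simp add: of_nat_diff)
  show "2 * int m \<le> 3 * int ((C-4)*((m-2) div (C+1)) + 5 - 2)" using k1 eq unfolding l_def M_def by simp
  have "M \<ge> 3*c + 6"
  proof -
    have f3: "M > 6*(c*c) + 6*(c*c*c)" using Mb by (simp add: algebra_simps)
    have "c*c \<ge> 15*c" using cc by (intro mult_right_mono) auto
    moreover have "c*c*c \<ge> 0" using cc by simp
    ultimately show ?thesis using f3 cc by linarith
  qed
  moreover have "\<And>X. 2*M \<le> 3*(X+3) \<Longrightarrow> 3*c+6 \<le> M \<Longrightarrow> c+2 \<le> X+3" using cc by presburger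
  ultimately have "c + 2 \<le> (c-4)*li + 3" using k1 by blast
  then show "int C + 2 \<le> int ((C-4)*((m-2) div (C+1)) + 5 - 2)" using eq unfolding l_def c_def by simp
qed

lemma NRA:
  fixes M R \<sigma> v0 v1 :: int and a2 :: nat
  assumes M: "20 \<le> M" and x0: "v0 \<in> {0, 1, M-3, M}" and x1: "v1 \<in> {0,1,M-3,M}" and a2: "a2 = 1 \<or> a2 = 2"
    and bc: "(a2 = 1 \<and> M mod 3 \<noteq> 2) \<or> (a2 = 2 \<and> M mod 3 = 2)"
    and R: "0 \<le> R" "R \<le> \<sigma>" and sb: "\<sigma> + (if a2 = 2 then 1 else 0) \<le> M - 5"
  shows "v0 + int a2 * v1 + 3*R \<noteq> 3*(\<sigma> + (if a2 = 2 then 1 else 0) + 1) + (if a2 = 1 \<and> M mod 3 = 0 then 2 else 0)"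
proof (cases "a2 = 1")
  case True
  then have bc': "M mod 3 = 0 \<or> M mod 3 = 1" using bc by auto
  have g: "v0 + v1 + 3*R \<noteq> 3*(\<sigma> + 1) + (if M mod 3 = 0 then 2 else 0)"
    using x0 x1 bc' R sb M True
    apply (simp only: insert_iff empty_iff simp_thms if_False)
    apply (elim disjE)
    apply (simp_all)
    apply presburger+
    done
  then show ?thesis using True by simp
next
  case False
  then have a22: "a2 = 2" "M mod 3 = 2" using a2 bc by auto
  have g: "v0 + 2 * v1 + 3*R \<noteq> 3*(\<sigma> + 2)"
    using x0 x1 a22 R sb M
    apply (simp only: insert_iff empty_iff simp_thms)
    apply (elim disjE)
    apply (simp_all)
    apply presburger+
    done
  then show ?thesis using a22 by simp
qed


locale S =
  fixes m :: nat and as :: "nat list" and L :: nat and a2 :: nat and C :: nat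
  assumes node: "escalator_node m as"
    and m20: "20 \<le> m"
    and L3: "3 \<le> L" and Ln: "L \<le> length as"
    and a0: "as!0 = 1" and a1: "as!1 = a2" and a2: "a2 = 1 \<or> a2 = 2"
    and thr: "\<forall>i. 2 \<le> i \<and> i < L \<longrightarrow> as!i = 3"
    and kb: "2 * int m \<le> 3 * int (L-2)"
    and kC: "int C + 2 \<le> int (L-2)"
begin

abbreviation "n \<equiv> length as"

lemma pos: "i < n \<Longrightarrow> 1 \<le> as!i"
proof -
  assume i: "i < n"
  have "as!i \<in> set as" using i by (rule nth_mem)
  then have "0 < as!i" using node_form[OF node] unfolding is_form_def by auto
  then show ?thesis by simp
qed

lemma divC: "0 \<le> N \<Longrightarrow> N \<le> int C * (int m - 2) \<Longrightarrow> N div (3*(int m - 3)) \<le> int C"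
proof -
  assume N: "0 \<le> N" "N \<le> int C * (int m - 2)"
  have d0: "0 < 3*(int m - 3)" using m20 by simp
  have "int C * (int m - 2) < 3*(int m - 3) * (int C + 1)"
  proof -
    have "int C * (int m - 2) \<le> int C * (3*(int m - 3))" using m20 by (intro mult_left_mono) auto
    then show ?thesis using m20 by (simp add: algebra_simps)
  qed
  then have "N < 3*(int m - 3) * (int C + 1)" using N by linarith
  moreover have "3*(int m - 3) * (N div (3*(int m - 3))) \<le> N"
  proof -
    have "N = 3*(int m - 3) * (N div (3*(int m - 3))) + N mod (3*(int m - 3))" by simp
    moreover have "0 \<le> N mod (3*(int m - 3))" using d0 by simp
    ultimately show ?thesis by linarith
  qed
  moreover have "N div (3*(int m - 3)) \<ge> int C + 1 \<Longrightarrow> 3*(int m - 3) * (int C + 1) \<le> 3*(int m - 3) * (N div (3*(int m - 3)))"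
    using d0 by (intro mult_left_mono) auto
  ultimately show ?thesis by linarith
qed

lemma cov_ok: "0 \<le> N \<Longrightarrow> N \<le> int C * (int m - 2) \<Longrightarrow> \<not> bad a2 m N \<or> N = 0 \<Longrightarrow> represents m as N"
  by (rule cov[OF refl, where L=L]) (use a0 a1 a2 thr m20 kb L3 Ln divC[of N] kC in auto)

lemma cov0L: "0 \<le> N \<Longrightarrow> N \<le> int C * (int m - 2) \<Longrightarrow> \<not> bad a2 m N \<or> N = 0 \<Longrightarrow>
  \<exists>x0 x1 g1. N = Pgon m x0 + int a2 * Pgon m x1 + (\<Sum>i\<in>{2..<L}. 3 * Pgon m (g1 i))"
proof -
  assume N: "0 \<le> N" "N \<le> int C * (int m - 2)" "\<not> bad a2 m N \<or> N = 0"
  have "N div (3*(int m - 3)) + 2 \<le> int (L-2)" using divC[OF N(1,2)] kC by linarith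
  from cov0[OF a2 m20 kb N(1) this N(3), of 2] obtain x0 x1 g1 where
    e: "N = Pgon m x0 + int a2 * Pgon m x1 + (\<Sum>i\<in>{2..<2+(L-2)}. 3 * Pgon m (g1 i))" by blast
  have eqL: "2 + (L-2) = L" using L3 by simp
  show ?thesis using e[unfolded eqL] by blast
qed

lemma bad_res: "bad a2 m X \<Longrightarrow> bad a2 m Y \<Longrightarrow> X mod 3 = Y mod 3"
  unfolding bad_def by auto

lemma part2:
  assumes last: "as!(n-1) mod 3 \<noteq> 0"
  shows "\<forall>N. 1 \<le> N \<and> N \<le> int C * (int m - 2) \<longrightarrow> represents m as N"
proof (intro allI impI)
  fix N assume N: "1 \<le> N \<and> N \<le> int C * (int m - 2)"
  define b where "b = as!(n-1)"
  have nL: "L \<le> n - 1"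
  proof (rule ccontr)
    assume "\<not> L \<le> n - 1"
    then have "as!(n-1) = 3" using thr L3 Ln by auto
    then show False using last by simp
  qed
  have p: "n - 1 < n" using nL L3 by auto
  from node_prefix[OF node p] have nu: "\<not> universal m (take (n-1) as)"
    and cr: "represents m (take (n-1) as @ [as!(n-1)]) (truant m (take (n-1) as))" by auto
  have bt: "int b \<le> truant m (take (n-1) as)" unfolding b_def
    by (rule child_le_truant) (use m20 nu cr in auto)
  show "represents m as N"
  proof (cases "bad a2 m N")
    case False then show ?thesis using cov_ok N by auto
  next
    case True
    show ?thesis
    proof (cases "N < int b")
      case True
      then have "represents m (take (n-1) as) N" using truant_props(3)[OF nu] N bt by auto
      then show ?thesis by (rule rep_prefix[rotated]) simp
    next
      case False
      have nb: "\<not> bad a2 m (N - int b)"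
      proof
        assume "bad a2 m (N - int b)"
        then have "(N - int b) mod 3 = N mod 3" using bad_res \<open>bad a2 m N\<close> by blast
        then have "int b mod 3 = 0" by presburger
        then show False using last unfolding b_def by presburger
      qed
      have "0 \<le> N - int b" "N - int b \<le> int C * (int m - 2)" using False N by auto
      from cov0L[OF this] nb obtain x0 x1 g1 where
        e: "N - int b = Pgon m x0 + int a2 * Pgon m x1 + (\<Sum>i\<in>{2..<L}. 3 * Pgon m (g1 i))" by blast
      let ?g2 = "\<lambda>i. if i = n - 1 then (1::int) else 0"
      have "represents m as (Pgon m x0 + int a2 * Pgon m x1 + (\<Sum>i\<in>{2..<L}. 3 * Pgon m (g1 i))
            + (\<Sum>i\<in>{L..<n}. int (as!i) * Pgon m (?g2 i)))"
        by (rule assemble) (use a0 a1 thr L3 Ln in auto)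
      moreover have "(\<Sum>i\<in>{L..<n}. int (as!i) * Pgon m (?g2 i)) = (\<Sum>i\<in>{L..<n}. if i = n - 1 then int (as!i) else 0)"
        by (rule sum.cong) auto
      moreover have "\<dots> = int b" using nL p unfolding b_def by (simp add: sum.delta)
      ultimately have r: "represents m as (Pgon m x0 + int a2 * Pgon m x1 + (\<Sum>i\<in>{2..<L}. 3 * Pgon m (g1 i)) + int b)"
        by simp
      have "N = Pgon m x0 + int a2 * Pgon m x1 + (\<Sum>i\<in>{2..<L}. 3 * Pgon m (g1 i)) + int b" using e by linarith
      then show ?thesis using r by simp
    qed
  qed
qed


definition T :: "nat \<Rightarrow> int" where "T p = (\<Sum>i\<in>{L..<p}. int (as!i))"
definition sig :: "nat \<Rightarrow> int" where "sig p = int L - 2 + T p div 3"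
definition del :: int where "del = (if a2 = 2 then 1 else 0)"
definition rho :: int where "rho = (if a2 = 1 \<and> int m mod 3 = 0 then 2 else 0)"
definition badcase :: bool where "badcase \<longleftrightarrow> (a2 = 1 \<and> int m mod 3 \<noteq> 2) \<or> (a2 = 2 \<and> int m mod 3 = 2)"

lemma two_sum: "(\<Sum>i<2. F i) = F 0 + F (1::nat)" for F :: "nat \<Rightarrow> int"
  by (simp add: numeral_2_eq_2)

lemma NR:
  assumes tail3: "\<forall>i. L \<le> i \<and> i < n \<longrightarrow> as!i mod 3 = 0" and bc: badcase
    and p: "L \<le> p" "p \<le> n" and sb: "sig p + del \<le> int m - 5"
  shows "\<not> represents m (take p as) (3*(sig p + del + 1) + rho)"
proof
  define N0 where "N0 = 3*(sig p + del + 1) + rho"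
  assume "represents m (take p as) (3*(sig p + del + 1) + rho)"
  then obtain f where f0: "N0 = (\<Sum>i<length (take p as). int (take p as!i) * Pgon m (f i))"
    unfolding rep_iff N0_def by blast
  define F where "F i = int (as!i) * Pgon m (f i)" for i
  have lt: "length (take p as) = p" using p by simp
  have f1: "N0 = (\<Sum>i<p. F i)" unfolding f0 lt F_def by (rule sum.cong) auto
  have p2: "2 \<le> p" using p L3 by auto
  have N0eq: "N0 = F 0 + F 1 + (\<Sum>i\<in>{2..<p}. F i)"
    unfolding f1 sum_split[OF p2] two_sum by simp
  have Fnn: "0 \<le> F i" for i unfolding F_def using m20 by (simp add: P_nonneg)
  have ge3: "3 \<le> as!i \<and> 3 dvd as!i" if "i \<in> {2..<p}" for i
  proof (cases "i < L")
    case True then show ?thesis using thr that by auto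
  next
    case False
    then have "as!i mod 3 = 0" "1 \<le> as!i" using tail3 that p pos[of i] by auto
    then show ?thesis by presburger
  qed
  have N0b: "N0 < 3 * (int m - 3)" unfolding N0_def rho_def using sb by auto
  have Rle: "(\<Sum>i\<in>{2..<p}. F i) \<le> N0" using N0eq Fnn[of 0] Fnn[of 1] by linarith
  have small: "f i = 0 \<or> f i = 1" if i: "i \<in> {2..<p}" for i
  proof (rule ccontr)
    assume "\<not> (f i = 0 \<or> f i = 1)"
    then have "int m - 3 \<le> Pgon m (f i)" using P_ge_m3 m20 by auto
    moreover have "3 \<le> int (as!i)" using ge3[OF i] by auto
    ultimately have "3 * (int m - 3) \<le> F i" unfolding F_def using m20 by (intro mult_mono) auto
    moreover have "F i \<le> (\<Sum>i\<in>{2..<p}. F i)" by (rule member_le_sum) (use i Fnn in auto)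
    ultimately show False using Rle N0b by linarith
  qed
  have Req: "(\<Sum>i\<in>{2..<p}. F i) = (\<Sum>i\<in>{2..<p}. if f i = 1 then int (as!i) else 0)"
  proof (rule sum.cong)
    fix x assume "x \<in> {2..<p}"
    then have "f x = 0 \<or> f x = 1" by (rule small)
    then show "F x = (if f x = 1 then int (as!x) else 0)" unfolding F_def by auto
  qed simp
  have Rub: "(\<Sum>i\<in>{2..<p}. F i) \<le> (\<Sum>i\<in>{2..<p}. int (as!i))" unfolding Req by (rule sum_mono) auto
  have Rdvd: "3 dvd (\<Sum>i\<in>{2..<p}. F i)" unfolding Req
  proof (rule dvd_sum)
    fix a assume a: "a \<in> {2..<p}"
    have "3 dvd as!a" using ge3[OF a] by auto
    then have "int 3 dvd int (as!a)" by (simp only: int_dvd_int_iff)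
    then show "3 dvd (if f a = 1 then int (as!a) else 0)" by simp
  qed
  have sumas: "(\<Sum>i\<in>{2..<p}. int (as!i)) = 3 * (int L - 2) + T p"
  proof -
    have "(\<Sum>i\<in>{2..<p}. int (as!i)) = (\<Sum>i\<in>{2..<L}. int (as!i)) + T p"
      unfolding T_def using p L3 by (simp add: sum.atLeastLessThan_concat)
    moreover have "(\<Sum>i\<in>{2..<L}. int (as!i)) = (\<Sum>i\<in>{2..<L}. 3)" by (rule sum.cong) (use thr in auto)
    ultimately show ?thesis using L3 by (simp add: of_nat_diff)
  qed
  have Tdvd: "3 dvd T p" unfolding T_def
  proof (rule dvd_sum)
    fix a assume a: "a \<in> {L..<p}"
    have "as!a mod 3 = 0" using tail3 a p by auto
    then have "3 dvd as!a" by presburger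
    then have "int 3 dvd int (as!a)" by (simp only: int_dvd_int_iff)
    then show "3 dvd int (as!a)" by simp
  qed
  obtain R' where R': "(\<Sum>i\<in>{2..<p}. F i) = 3 * R'" using Rdvd by blast
  have R'b: "0 \<le> R'" "R' \<le> sig p"
  proof -
    have "0 \<le> (\<Sum>i\<in>{2..<p}. F i)" by (rule sum_nonneg) (use Fnn in auto)
    then show "0 \<le> R'" using R' by simp
    have "3 * R' \<le> 3 * (int L - 2) + T p" using Rub sumas R' by simp
    moreover have "T p = 3 * (T p div 3)" using Tdvd by simp
    ultimately show "R' \<le> sig p" unfolding sig_def by presburger
  qed
  have F0: "F 0 = Pgon m (f 0)" "F 1 = int a2 * Pgon m (f 1)" unfolding F_def using a0 a1 by auto
  have "Pgon m (f 0) \<le> N0" "Pgon m (f 1) \<le> N0"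
  proof -
    show "Pgon m (f 0) \<le> N0" using N0eq F0 Fnn[of 1] sum_nonneg[of "{2..<p}" F] Fnn by auto
    have "Pgon m (f 1) \<le> int a2 * Pgon m (f 1)" using a2 P_nonneg[of m "f 1"] m20 by auto
    then show "Pgon m (f 1) \<le> N0" using N0eq F0 Fnn[of 0] sum_nonneg[of "{2..<p}" F] Fnn by auto
  qed
  then have "Pgon m (f 0) < 3 * int m - 8" "Pgon m (f 1) < 3 * int m - 8" using N0b by auto
  then have xs: "f 0 = -1 \<or> f 0 = 0 \<or> f 0 = 1 \<or> f 0 = 2" "f 1 = -1 \<or> f 1 = 0 \<or> f 1 = 1 \<or> f 1 = 2"
    using P_cases[of m "f 0"] P_cases[of m "f 1"] m20 by auto
  have v0: "Pgon m (f 0) \<in> {0, 1, int m - 3, int m}" using xs(1) by auto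
  have v1: "Pgon m (f 1) \<in> {0, 1, int m - 3, int m}" using xs(2) by auto
  have M20: "20 \<le> int m" using m20 by simp
  have bc': "(a2 = 1 \<and> int m mod 3 \<noteq> 2) \<or> (a2 = 2 \<and> int m mod 3 = 2)" using bc unfolding badcase_def .
  have sb': "sig p + (if a2 = 2 then 1 else 0) \<le> int m - 5" using sb unfolding del_def .
  from NRA[OF M20 v0 v1 a2 bc' R'b sb']
  have "Pgon m (f 0) + int a2 * Pgon m (f 1) + 3 * R' \<noteq> N0" unfolding N0_def del_def rho_def .
  then show False using N0eq F0 R' by simp
qed
end

context S begin

lemma TB:
  assumes tail3: "\<forall>i. L \<le> i \<and> i < n \<longrightarrow> as!i mod 3 = 0" and bc: badcase
    and p: "L \<le> p" "p < n" and sb: "sig p + del \<le> int m - 5"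
  shows "int (as!p) \<le> 3*(sig p + del + 1) + rho"
proof -
  from node_prefix[OF node p(2)] have nu: "\<not> universal m (take p as)"
    and cr: "represents m (take p as @ [as!p]) (truant m (take p as))" by auto
  have bt: "int (as!p) \<le> truant m (take p as)"
    by (rule child_le_truant) (use m20 nu cr in auto)
  have nr: "\<not> represents m (take p as) (3*(sig p + del + 1) + rho)"
    by (rule NR[OF tail3 bc p(1)]) (use p sb in auto)
  have "0 \<le> sig p"
  proof -
    have "0 \<le> T p" unfolding T_def by (rule sum_nonneg) simp
    then show ?thesis unfolding sig_def using L3 by (simp add: pos_imp_zdiv_nonneg_iff)
  qed
  then have "0 < 3*(sig p + del + 1) + rho" unfolding del_def rho_def by auto
  from truant_props(4)[OF nu this nr] bt show ?thesis by linarith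
qed

lemma T_Suc: "L \<le> p \<Longrightarrow> T (Suc p) = T p + int (as!p)"
  unfolding T_def by simp

lemma T_dvd: assumes tail3: "\<forall>i. L \<le> i \<and> i < n \<longrightarrow> as!i mod 3 = 0" and "p \<le> n"
  shows "3 dvd T p"
  unfolding T_def
proof (rule dvd_sum)
  fix a assume a: "a \<in> {L..<p}"
  have "as!a mod 3 = 0" using tail3 a assms(2) by auto
  then have "3 dvd as!a" by presburger
  then have "int 3 dvd int (as!a)" by (simp only: int_dvd_int_iff)
  then show "3 dvd int (as!a)" by simp
qed

lemma CT:
  assumes tail3: "\<forall>i. L \<le> i \<and> i < n \<longrightarrow> as!i mod 3 = 0" and bc: badcase
  shows "L \<le> p \<Longrightarrow> p \<le> n \<Longrightarrow> \<forall>q. 0 \<le> q \<and> q \<le> sig p + del \<and> q \<le> int m - 4 \<longrightarrow>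
     (\<exists>g w. (\<Sum>i\<in>{L..<p}. int (as!i) * Pgon m (g i)) = 3*w \<and> q - (int L - 2 + del) \<le> w \<and> w \<le> q)"
proof (induction p rule: dec_induct)
  case base
  show ?case
  proof (intro allI impI)
    fix q assume q: "0 \<le> q \<and> q \<le> sig L + del \<and> q \<le> int m - 4"
    have "sig L = int L - 2" unfolding sig_def T_def by simp
    then show "\<exists>g w. (\<Sum>i\<in>{L..<L}. int (as!i) * Pgon m (g i)) = 3*w \<and> q - (int L - 2 + del) \<le> w \<and> w \<le> q"
      using q by (intro exI[of _ "\<lambda>_. 0"] exI[of _ 0]) auto
  qed
next
  case (step p)
  have pn: "p < n" using step by auto
  have IH: "\<forall>q. 0 \<le> q \<and> q \<le> sig p + del \<and> q \<le> int m - 4 \<longrightarrow>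
     (\<exists>g w. (\<Sum>i\<in>{L..<p}. int (as!i) * Pgon m (g i)) = 3*w \<and> q - (int L - 2 + del) \<le> w \<and> w \<le> q)"
    using step pn by auto
  define c where "c = int (as!p) div 3"
  have ac: "int (as!p) = 3*c"
  proof -
    have "as!p mod 3 = 0" using tail3 step pn by auto
    then show ?thesis unfolding c_def by presburger
  qed
  have sigS: "sig (Suc p) = sig p + c"
  proof -
    have "3 dvd T p" using T_dvd[OF tail3] pn by auto
    then show ?thesis unfolding sig_def T_Suc[OF step(1)] ac by auto
  qed
  have ext: "(\<Sum>i\<in>{L..<Suc p}. int (as!i) * Pgon m ((g(p := v)) i)) = (\<Sum>i\<in>{L..<p}. int (as!i) * Pgon m (g i)) + int (as!p) * Pgon m v" for g v
  proof -
    have "(\<Sum>i\<in>{L..<p}. int (as!i) * Pgon m ((g(p := v)) i)) = (\<Sum>i\<in>{L..<p}. int (as!i) * Pgon m (g i))"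
      by (rule sum.cong) auto
    then show ?thesis using step(1) by simp
  qed
  show ?case
  proof (intro allI impI)
    fix q assume q: "0 \<le> q \<and> q \<le> sig (Suc p) + del \<and> q \<le> int m - 4"
    show "\<exists>g w. (\<Sum>i\<in>{L..<Suc p}. int (as!i) * Pgon m (g i)) = 3*w \<and> q - (int L - 2 + del) \<le> w \<and> w \<le> q"
    proof (cases "q \<le> sig p + del")
      case True
      then obtain g w where gw: "(\<Sum>i\<in>{L..<p}. int (as!i) * Pgon m (g i)) = 3*w" "q - (int L - 2 + del) \<le> w" "w \<le> q"
        using IH q by blast
      show ?thesis using gw ext[of g 0] by (intro exI[of _ "g(p := 0)"] exI[of _ w]) auto
    next
      case False
      then have sb: "sig p + del \<le> int m - 5" using q by auto
      have "int (as!p) \<le> 3*(sig p + del + 1) + rho" by (rule TB[OF tail3 bc step(1) pn sb])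
      moreover have "rho \<le> 2" unfolding rho_def by auto
      ultimately have "3*c \<le> 3*(sig p + del + 1) + 2" using ac by linarith
      then have cb: "c \<le> sig p + del + 1" by presburger
      have "0 \<le> q - c \<and> q - c \<le> sig p + del \<and> q - c \<le> int m - 4"
      proof -
        have "0 \<le> c" using ac by simp
        then show ?thesis using q False cb sigS by auto
      qed
      then obtain g w where gw: "(\<Sum>i\<in>{L..<p}. int (as!i) * Pgon m (g i)) = 3*w" "q - c - (int L - 2 + del) \<le> w" "w \<le> q - c"
        using IH by blast
      show ?thesis using gw ext[of g 1] ac by (intro exI[of _ "g(p := 1)"] exI[of _ "w + c"]) auto
    qed
  qed
qed


lemma bad_props: "bad a2 m N \<Longrightarrow> badcase \<and> N mod 3 = rho"
  unfolding bad_def badcase_def rho_def using a2 by auto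

lemma part1:
  assumes tail3: "\<forall>i. L \<le> i \<and> i < n \<longrightarrow> as!i mod 3 = 0"
    and sumc: "int (sum_list as) \<ge> 3*(int m - 3) - 1"
  shows "\<forall>N. 1 \<le> N \<and> N \<le> int C * (int m - 2) \<longrightarrow> represents m as N"
proof (intro allI impI)
  fix N assume N: "1 \<le> N \<and> N \<le> int C * (int m - 2)"
  show "represents m as N"
  proof (cases "bad a2 m N")
    case False then show ?thesis using cov_ok N by auto
  next
    case True
    then have bc: badcase and Nr: "N mod 3 = rho" using bad_props by auto
    define M where "M = int m"
    define k where "k = int L - 2"
    have M20: "20 \<le> M" using m20 unfolding M_def by simp
    have sig_n: "sig n \<ge> M - 4"
    proof -
      have "int (sum_list as) = (\<Sum>i<n. int (as!i))"
        by (simp add: sum_list_sum_nth atLeast0LessThan)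
      also have "\<dots> = (\<Sum>i<2. int (as!i)) + (\<Sum>i\<in>{2..<n}. int (as!i))"
        by (rule sum_split) (use L3 Ln in auto)
      also have "(\<Sum>i<2. int (as!i)) = 1 + int a2" using a0 a1 by (simp add: numeral_2_eq_2)
      also have "(\<Sum>i\<in>{2..<n}. int (as!i)) = (\<Sum>i\<in>{2..<L}. int (as!i)) + T n"
        unfolding T_def using L3 Ln by (simp add: sum.atLeastLessThan_concat)
      also have "(\<Sum>i\<in>{2..<L}. int (as!i)) = (\<Sum>i\<in>{2..<L}. 3)" by (rule sum.cong) (use thr in auto)
      finally have e: "int (sum_list as) = 1 + int a2 + 3 * (int L - 2) + T n" using L3 by (simp add: of_nat_diff)
      have "3 dvd T n" using T_dvd[OF tail3] by simp
      then have "T n = 3 * (T n div 3)" by simp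
      then have "3 * sig n = 3 * (int L - 2) + T n" unfolding sig_def by simp
      then have "1 + int a2 + 3 * sig n \<ge> 3 * (M - 3) - 1" using e sumc unfolding M_def by linarith
      moreover have "int a2 \<le> 2" using a2 by auto
      ultimately have "3 * sig n \<ge> 3*M - 13" by presburger
      then show ?thesis by presburger
    qed
    define Q where "Q = N div 3"
    have "N = 3*(N div 3) + N mod 3" by simp
    then have NQ: "N = 3*Q + rho" unfolding Q_def using Nr by simp
    have rho02: "rho = 0 \<or> rho = 2" unfolding rho_def by auto
    have Q0: "0 \<le> Q" unfolding Q_def using N by (simp add: pos_imp_zdiv_nonneg_iff)
    define s where "s = Q div (M-3)"
    define q where "q = Q mod (M-3)"
    have Qsq: "Q = (M-3)*s + q" unfolding s_def q_def by simp
    have M3: "0 < M - 3" using M20 by simp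
    have qq: "0 \<le> Q mod (M-3)" "Q mod (M-3) < M-3" using M3 by simp_all
    then have q: "0 \<le> q" "q \<le> M - 4" unfolding q_def by linarith+
    have s0: "0 \<le> s" unfolding s_def using Q0 M3 by (simp add: pos_imp_zdiv_nonneg_iff)
    have sC: "s \<le> int C"
    proof (rule ccontr)
      assume "\<not> s \<le> int C"
      define X where "X = (M-3) * (int C + 1)"
      define Y where "Y = (M-3) * s"
      define Z where "Z = int C * (int m - 2)"
      have h1: "X \<le> Y" unfolding X_def Y_def using M3 \<open>\<not> s \<le> int C\<close> by (intro mult_left_mono) auto
      have h2: "Y \<le> Q" using Qsq q unfolding Y_def by linarith
      have h3: "Z < 3 * X"
      proof -
        have "int C * (M - 2) \<le> int C * (3*(M - 3))" using M20 by (intro mult_left_mono) auto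
        then show ?thesis unfolding X_def Z_def M_def using m20 by (simp add: algebra_simps)
      qed
      have h4: "3*Q \<le> N" using NQ rho02 by auto
      have h5: "N \<le> Z" using N unfolding Z_def by simp
      from h1 h2 h3 h4 h5 show False by linarith
    qed
    have kk: "int (L - 2) = k" unfolding k_def using L3 by (simp add: of_nat_diff)
    have s2: "s + 2 \<le> int (L-2)" using sC kC by linarith
    have del0: "0 \<le> del" unfolding del_def by auto
    have qc: "0 \<le> q \<and> q \<le> sig n + del \<and> q \<le> int m - 4" using q sig_n del0 unfolding M_def by auto
    from CT[OF tail3 bc Ln order_refl] qc obtain g2 w where
      gw: "(\<Sum>i\<in>{L..<n}. int (as!i) * Pgon m (g2 i)) = 3*w" "q - (int L - 2 + del) \<le> w" "w \<le> q"
      by blast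
    define d where "d = q - w"
    have d: "0 \<le> d" "d \<le> k + del" using gw unfolding d_def k_def by auto
    have eqL: "2 + (L-2) = L" using L3 by simp
    have asm: "length as = n" "2 \<le> L" "L \<le> n" "as!0 = 1" "as!1 = a2" "\<forall>i. 2 \<le> i \<and> i < L \<longrightarrow> as!i = 3"
      using L3 Ln a0 a1 thr by auto
    show ?thesis
    proof (cases "d \<le> k")
      case True
      define x where "x = (if rho = 2 then (1::int) else 0)"
      have xv: "Pgon m x + int a2 * Pgon m x = rho"
      proof (cases "rho = 2")
        case True then have "a2 = 1" unfolding rho_def by (auto split: if_splits)
        then show ?thesis using True unfolding x_def by simp
      next
        case False then have "rho = 0" using rho02 by auto
        then show ?thesis using False unfolding x_def by simp
      qed
      have dk: "d \<le> int (L-2) + 2*s" using True kk s0 by linarith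
      from threes[OF s0 d(1) dk s2, where lo=2 and m=m] obtain g1 where
        g1: "(\<Sum>i\<in>{2..<2+(L-2)}. 3 * Pgon m (g1 i)) = 3 * (s * (int m - 3) + d)" by blast
      have r: "represents m as (Pgon m x + int a2 * Pgon m x + (\<Sum>i\<in>{2..<L}. 3 * Pgon m (g1 i))
            + (\<Sum>i\<in>{L..<n}. int (as!i) * Pgon m (g2 i)))"
        by (rule assemble[OF asm])
      have "Pgon m x + int a2 * Pgon m x + (\<Sum>i\<in>{2..<L}. 3 * Pgon m (g1 i))
            + (\<Sum>i\<in>{L..<n}. int (as!i) * Pgon m (g2 i)) = rho + 3 * (s * (int m - 3) + d) + 3*w"
        by (simp only: xv g1[unfolded eqL] gw(1))
      also have "\<dots> = N" unfolding NQ Qsq d_def M_def by (simp add: algebra_simps)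
      finally show ?thesis using r by simp
    next
      case False
      then have dk: "d = k + 1" "del = 1" using d unfolding del_def by (auto split: if_splits)
      then have a22: "a2 = 2" unfolding del_def by (auto split: if_splits)
      then have r0: "rho = 0" unfolding rho_def by simp
      have kpos: "0 \<le> int (L-2)" by simp
      have kk2: "int (L-2) \<le> int (L-2) + 2*s" using s0 by simp
      from threes[OF s0 kpos kk2 s2, where lo=2 and m=m] obtain g1 where
        g1: "(\<Sum>i\<in>{2..<2+(L-2)}. 3 * Pgon m (g1 i)) = 3 * (s * (int m - 3) + int (L-2))" by blast
      have r: "represents m as (Pgon m 1 + int a2 * Pgon m 1 + (\<Sum>i\<in>{2..<L}. 3 * Pgon m (g1 i))
            + (\<Sum>i\<in>{L..<n}. int (as!i) * Pgon m (g2 i)))"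
        by (rule assemble[OF asm])
      have "Pgon m 1 + int a2 * Pgon m 1 + (\<Sum>i\<in>{2..<L}. 3 * Pgon m (g1 i))
            + (\<Sum>i\<in>{L..<n}. int (as!i) * Pgon m (g2 i)) = 3 + 3 * (s * (int m - 3) + int (L-2)) + 3*w"
        using a22 by (simp only: g1[unfolded eqL] gw(1)) simp
      also have "\<dots> = N" unfolding NQ Qsq r0 using dk(1) kk unfolding d_def M_def by (simp add: algebra_simps)
      finally show ?thesis using r by simp
    qed
  qed
qed
end

lemma truant_nil: "truant m [] = 1"
proof -
  have r: "represents m [] N \<longleftrightarrow> N = 0" for N unfolding rep_iff by simp
  have nu: "\<not> universal m []"
  proof
    assume "universal m []"
    then have "represents m [] 1" unfolding universal_def by auto
    with r show False by simp
  qed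
  have "truant m [] \<le> 1" using truant_props(4)[OF nu, of 1] r by auto
  moreover have "0 < truant m []" using truant_props(1)[OF nu] .
  ultimately show ?thesis by simp
qed

lemma rep_single: "represents m [a] N \<Longrightarrow> \<exists>x. N = int a * Pgon m x"
  unfolding rep_iff by auto

lemma truant_one: assumes "20 \<le> m" shows "truant m [1] = 2"
proof -
  have r1: "represents m [1] 1" unfolding rep_iff by (intro exI[of _ "\<lambda>_. 1"]) simp
  have r2: "\<not> represents m [1] 2"
  proof
    assume "represents m [1] 2"
    then obtain x where x: "2 = Pgon m x" using rep_single[of m 1 2] by auto
    then have "Pgon m x < 3 * int m - 8" using assms by simp
    then have "x = -1 \<or> x = 0 \<or> x = 1 \<or> x = 2" using P_cases[of m x] assms by auto
    then show False using x assms by auto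
  qed
  have nu: "\<not> universal m [1]"
  proof
    assume "universal m [1]"
    then have "represents m [1] 2" unfolding universal_def by auto
    with r2 show False by simp
  qed
  have "truant m [1] \<le> 2" using truant_props(4)[OF nu, of 2] r2 by auto
  moreover have "truant m [1] \<noteq> 1" using truant_props(2)[OF nu] r1 by auto
  moreover have "0 < truant m [1]" using truant_props(1)[OF nu] .
  ultimately show ?thesis by simp
qed

theorem lemma4p17:
  fixes C m :: nat and as :: "nat list"
  assumes hC: "standing_constant C"
    and hm3: "3 \<le> m"
    and hm: "m > 6 * C^2 * (C + 1)"
    and hnode: "escalator_node m as"
    and hn: "int (length as) \<ge> (int C - 4) * int ((m - 2) div (C + 1)) + 5"
    and h3: "\<forall>i. 3 \<le> i \<and> int i \<le> (int C - 4) * int ((m - 2) div (C + 1)) + 5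
               \<longrightarrow> as ! (i - 1) = 3"
  shows "((int (sum_list as) \<ge> 3 * (int m - 3) - 1 \<and>
           (\<forall>i. 3 \<le> i \<and> i \<le> length as \<longrightarrow> as ! (i - 1) mod 3 = 0))
            \<longrightarrow> universal m as)
       \<and> (last as mod 3 \<noteq> 0 \<longrightarrow> universal m as)"
proof -
  have C15: "15 \<le> C" by (rule C_ge15[OF hC])
  define L where "L = (C-4)*((m-2) div (C+1)) + 5"
  have pr: "2 * int m \<le> 3 * int (L-2)" "int C + 2 \<le> int (L-2)" "20 \<le> m"
    unfolding L_def by (rule params[OF C15 hm])+
  have Lint: "int L = (int C - 4) * int ((m - 2) div (C + 1)) + 5" unfolding L_def using C15 by (simp add: of_nat_diff)
  have Ln: "L \<le> length as" using hn Lint by linarith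
  have L3: "3 \<le> L" unfolding L_def by simp
  have thr: "\<forall>i. 2 \<le> i \<and> i < L \<longrightarrow> as!i = 3"
  proof (intro allI impI)
    fix i assume i: "2 \<le> i \<and> i < L"
    have "3 \<le> Suc i \<and> int (Suc i) \<le> (int C - 4) * int ((m - 2) div (C + 1)) + 5" using i Lint by auto
    then have "as ! (Suc i - 1) = 3" using h3 by blast
    then show "as!i = 3" by simp
  qed
  have m4: "4 \<le> m" using pr by simp
  have l0: "0 < length as" "1 < length as" using Ln L3 by auto
  have form: "is_form as" by (rule node_form[OF hnode])
  have "as!0 \<in> set as" using l0 by simp
  then have p0: "0 < int (as!0)" using form unfolding is_form_def by auto
  from node_prefix[OF hnode l0(1)] have c0: "represents m [as!0] 1" using truant_nil by simp
  then obtain x where "1 = int (as!0) * Pgon m x" using rep_single by blast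
  then have "int (as!0) * Pgon m x = 1" by simp
  then have "int (as!0) = 1" using p0 by (simp add: pos_zmult_eq_1_iff)
  then have a0: "as!0 = 1" by simp
  have t1: "take 1 as = [1]" using a0 l0 by (simp add: take_Suc_conv_app_nth)
  from node_prefix[OF hnode l0(2)] have nu1: "\<not> universal m [1]"
    and c1: "represents m ([1] @ [as!1]) (truant m [1])" using t1 by auto
  have "int (as!1) \<le> truant m [1]" by (rule child_le_truant[OF m4 nu1 c1])
  then have a1le: "as!1 \<le> 2" using truant_one pr by simp
  have "as!1 \<in> set as" using l0 by simp
  then have "0 < as!1" using form unfolding is_form_def by auto
  then have a2: "as!1 = 1 \<or> as!1 = 2" using a1le by auto
  interpret S m as L "as!1" C
    by unfold_locales (use hnode pr L3 Ln a0 a2 thr in auto)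
  have hC': "(\<forall>N. 1 \<le> N \<and> N \<le> int C * (int m - 2) \<longrightarrow> represents m as N) \<Longrightarrow> universal m as"
    using hC form hm3 unfolding standing_constant_def by blast
  show ?thesis
  proof (intro conjI impI)
    assume h: "int (sum_list as) \<ge> 3 * (int m - 3) - 1 \<and>
           (\<forall>i. 3 \<le> i \<and> i \<le> length as \<longrightarrow> as ! (i - 1) mod 3 = 0)"
    have tail3: "\<forall>i. L \<le> i \<and> i < length as \<longrightarrow> as!i mod 3 = 0"
    proof (intro allI impI)
      fix i assume i: "L \<le> i \<and> i < length as"
      then have "3 \<le> Suc i \<and> Suc i \<le> length as" using L3 by auto
      then have "as ! (Suc i - 1) mod 3 = 0" using h by blast
      then show "as!i mod 3 = 0" by simp
    qed
    show "universal m as" by (rule hC'[OF part1[OF tail3]]) (use h in auto)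
  next
    assume h: "last as mod 3 \<noteq> 0"
    have "last as = as!(length as - 1)" using l0 by (simp add: last_conv_nth)
    then show "universal m as" using h part2 hC' by auto
  qed
qed

end
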